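(* Let $f(y_1,\dots,y_k,z_1,\dots,z_l)\in\mathbb{R}\langle Y;Z\rangle$ be a multilinear $*$-polynomial, and let $M_n(\mathbb{R})$ be endowed with the transpose involution. Let \[ g(y_1,\dots,y_{k+2l})=f(y_1,\dots,y_k,[y_{k+1},y_{k+2}],\dots,[y_{k+2l-1},y_{k+2l}]). \] Then the image of $f$ on $M_n(\mathbb{R})$, i.e. $\{f(a_1,\dots,a_k,b_1,\dots,b_l): a_i \text{ symmetric}, b_j \text{ skew-symmetric}\}$, equals the image of $g$ evaluated on symmetric matrices, i.e. $\{g(c_1,\dots,c_{k+2l}): c_i\in M_n(\mathbb{R}) \text{ symmetric}\}$.
   Context: $\mathbb{R}\langle Y;Z\rangle$ is the free associative algebra over $\mathbb{R}$ on symmetric variables $Y=\{y_1,y_2,\dots\}$ and skew-symmetric variables $Z=\{z_1,z_2,\dots\}$; $[u,v]=uv-vu$. A multilinear polynomial is one in which each variable occurs exactly once in every monomial. *)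

theory Defs
  imports "HOL-Analysis.Analysis"
begin

text \<open>A multilinear polynomial in m noncommuting variables x_0,...,x_(m-1) is a real
linear combination of the monomials x_(p!0) x_(p!1) ... x_(p!(m-1)), where p ranges over
the orderings (permutations) of [0..<m].  It is given by its coefficient function
on such orderings (values on other lists are irrelevant).\<close>

definition orderings :: "nat \<Rightarrow> nat list set" where
  "orderings m = {p. distinct p \<and> set p = {0..<m}}"

definition mat_list_prod :: "(real^'n^'n) list \<Rightarrow> real^'n^'n" where
  "mat_list_prod As = foldr (\<lambda>A B. A ** B) As (mat 1)"

definition ml_eval :: "nat \<Rightarrow> (nat list \<Rightarrow> real) \<Rightarrow> (nat \<Rightarrow> real^'n^'n) \<Rightarrow> real^'n^'n" where
  "ml_eval m c a = (\<Sum>p\<in>orderings m. c p *\<^sub>R mat_list_prod (map a p))"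

definition sym_mat :: "real^'n^'n \<Rightarrow> bool" where
  "sym_mat A \<longleftrightarrow> transpose A = A"

definition skew_mat :: "real^'n^'n \<Rightarrow> bool" where
  "skew_mat A \<longleftrightarrow> transpose A = - A"

definition commut :: "real^'n^'n \<Rightarrow> real^'n^'n \<Rightarrow> real^'n^'n" where
  "commut A B = A ** B - B ** A"

text \<open>Image of the multilinear *-polynomial f(y_1..y_k,z_1..z_l) (variables 0..<k are the
symmetric y's, variables k..<k+l are the skew z's) on M_n(R) with transpose involution.\<close>
definition star_image :: "nat \<Rightarrow> nat \<Rightarrow> (nat list \<Rightarrow> real) \<Rightarrow> (real^'n^'n) set" where
  "star_image k l c = {ml_eval (k + l) c a | a.
      (\<forall>i<k. sym_mat (a i)) \<and> (\<forall>j<l. skew_mat (a (k + j)))}"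

definition g_eval :: "nat \<Rightarrow> nat \<Rightarrow> (nat list \<Rightarrow> real) \<Rightarrow> (nat \<Rightarrow> real^'n^'n) \<Rightarrow> real^'n^'n" where
  "g_eval k l c y = ml_eval (k + l) c
     (\<lambda>i. if i < k then y i else commut (y (k + 2 * (i - k))) (y (k + 2 * (i - k) + 1)))"

definition g_sym_image :: "nat \<Rightarrow> nat \<Rightarrow> (nat list \<Rightarrow> real) \<Rightarrow> (real^'n^'n) set" where
  "g_sym_image k l c = {g_eval k l c y | y. \<forall>i<k + 2 * l. sym_mat (y i)}"

end

theory Submission
  imports Defs
begin

lemma ml_eval_cong:
  assumes "\<And>i. i < m \<Longrightarrow> a i = b i"
  shows "ml_eval m c a = ml_eval m c b"
  unfolding ml_eval_def
proof (rule sum.cong[OF refl])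
  fix p assume "p \<in> orderings m"
  then have "set p = {0..<m}" by (simp add: orderings_def)
  then have "\<forall>x\<in>set p. a x = b x" using assms by auto
  then have "map a p = map b p" by (simp add: map_eq_conv)
  then show "c p *\<^sub>R mat_list_prod (map a p) = c p *\<^sub>R mat_list_prod (map b p)" by (simp only:)
qed

lemma commut_skew:
  fixes A B :: "real^'n^'n"
  assumes "sym_mat A" "sym_mat B"
  shows "skew_mat (commut A B)"
proof -
  have td: "transpose (X - Y) = transpose X - transpose Y" for X Y :: "real^'n^'n"
    by (simp add: transpose_def vec_eq_iff)
  show ?thesis using assms unfolding sym_mat_def skew_mat_def commut_def
    by (simp add: td matrix_transpose_mul)
qed

lemma skew_commut:
  fixes S :: "real^'n^'n"
  assumes "skew_mat S"
  shows "\<exists>A B. sym_mat A \<and> sym_mat B \<and> S = commut A B"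
proof -
  obtain f :: "'n \<Rightarrow> nat" where f: "inj f"
    using finite_imp_inj_to_nat_seg[of "UNIV :: 'n set"] by auto
  define d where "d i = real (f i)" for i
  have dd: "d i \<noteq> d j" if "i \<noteq> j" for i j
    using f that unfolding d_def inj_def by auto
  have S: "S $ j $ i = - S $ i $ j" for i j
    proof -
    have "transpose S $ i $ j = (- S) $ i $ j" using assms unfolding skew_mat_def by simp
    then show ?thesis by (simp add: transpose_def)
  qed
  have S0: "S $ i $ i = 0" for i using S[of i i] by simp
  define D :: "real^'n^'n" where "D = (\<chi> i j. if i = j then d i else 0)"
  define B :: "real^'n^'n" where "B = (\<chi> i j. if i = j then 0 else S $ i $ j / (d i - d j))"
  have "sym_mat D" unfolding sym_mat_def D_def transpose_def by (auto simp: vec_eq_iff)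
  moreover have "sym_mat B" unfolding sym_mat_def B_def transpose_def
  proof (clarsimp simp: vec_eq_iff)
    fix i j :: 'n assume "i \<noteq> j"
    then have "d i - d j \<noteq> 0" using dd by auto
    then show "S $ j $ i / (d j - d i) = S $ i $ j / (d i - d j)"
      using S[of i j] by (simp add: field_simps)
  qed
  moreover have "S = commut D B"
  proof -
    have "(D ** B) $ i $ j = d i * B $ i $ j" for i j
      unfolding matrix_matrix_mult_def D_def
      by (simp add: if_distrib[where f="\<lambda>x. x * _"] sum.delta cong: if_cong)
    moreover have "(B ** D) $ i $ j = B $ i $ j * d j" for i j
      unfolding matrix_matrix_mult_def D_def
      by (simp add: if_distrib[where f="\<lambda>x. _ * x"] sum.delta' cong: if_cong)
    moreover have "S $ i $ j = d i * B $ i $ j - B $ i $ j * d j" for i j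
    proof (cases "i = j")
      case True then show ?thesis by (simp add: S0 B_def)
    next
      case False
      then have "d i - d j \<noteq> 0" using dd by auto
      have "d i * (S $ i $ j / (d i - d j)) - (S $ i $ j / (d i - d j)) * d j
          = (d i - d j) * (S $ i $ j / (d i - d j))" by (simp only: left_diff_distrib mult.commute)
      also have "\<dots> = S $ i $ j" using \<open>d i - d j \<noteq> 0\<close> by simp
      finally show ?thesis using False by (simp add: B_def)
    qed
    ultimately show ?thesis unfolding commut_def by (simp add: vec_eq_iff)
  qed
  ultimately show ?thesis by blast
qed

theorem mainTheorem5:
  fixes k l :: nat and c :: "nat list \<Rightarrow> real"
  shows "(star_image k l c :: (real^'n^'n) set) = g_sym_image k l c"
proof
  show "star_image k l c \<subseteq> (g_sym_image k l c :: (real^'n^'n) set)"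
  proof
    fix x :: "real^'n^'n" assume "x \<in> star_image k l c"
    then obtain a where x: "x = ml_eval (k + l) c a" and sa: "\<forall>i<k. sym_mat (a i)"
      and ka: "\<forall>j<l. skew_mat (a (k + j))" unfolding star_image_def by blast
    have "\<forall>j. \<exists>P Q. j < l \<longrightarrow> sym_mat P \<and> sym_mat Q \<and> a (k + j) = commut P Q"
      using ka skew_commut by blast
    then obtain P Q where PQ: "\<And>j. j < l \<Longrightarrow> sym_mat (P j) \<and> sym_mat (Q j) \<and> a (k + j) = commut (P j) (Q j)"
      by metis
    define y where "y i = (if i < k then a i else if even (i - k) then P ((i - k) div 2) else Q ((i - k) div 2))" for i
    have sy: "\<forall>i<k + 2 * l. sym_mat (y i)"
    proof (intro allI impI)
      fix i assume "i < k + 2 * l"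
      then have "i < k \<or> (i - k) div 2 < l" by auto
      then show "sym_mat (y i)" unfolding y_def using sa PQ by auto
    qed
    have "g_eval k l c y = x"
      unfolding g_eval_def x
    proof (rule ml_eval_cong)
      fix i assume i: "i < k + l"
      show "(if i < k then y i else commut (y (k + 2 * (i - k))) (y (k + 2 * (i - k) + 1))) = a i"
      proof (cases "i < k")
        case True then show ?thesis by (simp add: y_def)
      next
        case False
        then obtain j where j: "i = k + j" "j < l" using i by (metis add_less_cancel_left le_Suc_ex not_less)
        have "odd (2 * j + 1)" by simp
        then show ?thesis using False j PQ[of j] by (simp add: y_def)
      qed
    qed
    then show "x \<in> g_sym_image k l c" unfolding g_sym_image_def using sy by blast
  qed
next
  show "g_sym_image k l c \<subseteq> (star_image k l c :: (real^'n^'n) set)"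
  proof
    fix x :: "real^'n^'n" assume "x \<in> g_sym_image k l c"
    then obtain y where x: "x = g_eval k l c y" and sy: "\<forall>i<k + 2 * l. sym_mat (y i)"
      unfolding g_sym_image_def by blast
    define a where "a i = (if i < k then y i else commut (y (k + 2 * (i - k))) (y (k + 2 * (i - k) + 1)))" for i
    have "x = ml_eval (k + l) c a" unfolding x g_eval_def a_def by simp
    moreover have "\<forall>i<k. sym_mat (a i)" using sy by (simp add: a_def)
    moreover have "\<forall>j<l. skew_mat (a (k + j))"
      using sy by (auto simp: a_def intro!: commut_skew)
    ultimately show "x \<in> star_image k l c" unfolding star_image_def by blast
  qed
qed

end
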